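(* Let $\mathcal C$ be a collective choice problem satisfying Generic Finite Alternatives. For the amendment procedure with $T$ rounds and initial default $x^0$, the equilibrium outcome correspondence satisfies $f_T(x^0)=\{\phi^T(x^0)\}$. Moreover: (a) There exists a pure-strategy equilibrium in which (i) the agenda setter always proposes $\phi(x)$ when the current default is $x$, and (ii) each voter $i$ votes to approve proposal $y$ in round $t$ if and only if $\phi^{T-t}(y)\succsim_i\phi^{T-t}(x^{t-1})$, where $x^{t-1}$ is the current default. (b) For an initial default $x^0$, $f_T(x^0)=\{x^0\}$ if and only if $x^0\in E$. (c) If $T\ge |X|-1$, then $\bigcup_{x^0\in X}f_T(x^0)=E$.
   Context: Collective choice problem: voters $N=\{1,\dots,n\}$ ($n$ odd) and a non-voting agenda setter $A$ choose from a policy space $X$; each player $i\in N\cup\{A\}$ has a complete, transitive preference $\succsim_i$ with utility representation $u_i$. $x\succ_M y$ means a strict majority of voters strictly prefer $x$ to $y$. Generic Finite Alternatives: $X$ is finite and all preferences are antisymmetric. Define $M(x)=\{y\in X: y\succ_M x \text{ or } y=x\}$, the agenda setter's favorite improvement map $\phi:X\to X$ by $\{\phi(x)\}=\arg\max_{y\in M(x)}u_A(y)$, $\phi^t$ its $t$-fold iterate ($\phi^0$ the identity), and $E=\{x\in X: x=\phi(x)\}$. Amendment procedure with $T$ rounds: initial default $x^0$; in each round $t$ the agenda setter proposes $a^t\in X$, voted against the default $x^{t-1}$ by simple majority; $x^t=a^t$ if it passes and $x^t=x^{t-1}$ otherwise; $x^T$ is implemented. Strategies may depend on the full history and may be mixed.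 Equilibrium: subgame perfect equilibrium with as-if-pivotal voting (at histories where passage leads to continuation outcome $x$ and rejection to $y$ regardless of the vote composition, voters with a strict preference between $x$ and $y$ vote for the option leading to the preferred one). $f_T(x^0)$ denotes the set of policies implemented with positive probability in some equilibrium of the $T$-round game with initial default $x^0$. *)

theory Defs
  imports "HOL-Probability.Probability"
begin

(* Policy space X = UNIV :: 'a (finite type); voters N = UNIV :: 'v (finite type, n = CARD('v)).
   Voter i's preference: x \<succsim>_i y iff u i x \<ge> u i y; agenda setter's utility uA. *)

type_synonym ('a, 'v) hist = "('a \<times> ('v \<Rightarrow> bool)) list"

definition passes :: "('v::finite \<Rightarrow> bool) \<Rightarrow> bool" where
  "passes S \<longleftrightarrow> 2 * card {i. S i} > CARD('v)"

definition maj :: "('v::finite \<Rightarrow> 'a \<Rightarrow> real) \<Rightarrow> 'a \<Rightarrow> 'a \<Rightarrow> bool" where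
  "maj u x y \<longleftrightarrow> 2 * card {i. u i x > u i y} > CARD('v)"

definition Mset :: "('v::finite \<Rightarrow> 'a \<Rightarrow> real) \<Rightarrow> 'a \<Rightarrow> 'a set" where
  "Mset u x = {y. maj u y x \<or> y = x}"

definition phi :: "('v::finite \<Rightarrow> 'a \<Rightarrow> real) \<Rightarrow> ('a \<Rightarrow> real) \<Rightarrow> 'a \<Rightarrow> 'a" where
  "phi u uA x = (THE y. y \<in> Mset u x \<and> (\<forall>z\<in>Mset u x. uA z \<le> uA y))"

definition Eset :: "('v::finite \<Rightarrow> 'a \<Rightarrow> real) \<Rightarrow> ('a \<Rightarrow> real) \<Rightarrow> 'a set" where
  "Eset u uA = {x. phi u uA x = x}"

definition dflt :: "'a \<Rightarrow> ('a, 'v::finite) hist \<Rightarrow> 'a" where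
  "dflt x0 h = foldl (\<lambda>x (a, S). if passes S then a else x) x0 h"

type_synonym ('a, 'v) setter_strat = "('a, 'v) hist \<Rightarrow> 'a pmf"
type_synonym ('a, 'v) voter_strat = "'v \<Rightarrow> ('a, 'v) hist \<Rightarrow> 'a \<Rightarrow> bool pmf"

(* voters vote simultaneously and independently (behavioural strategies) *)
definition votes :: "('a, 'v::finite) voter_strat \<Rightarrow> ('a, 'v) hist \<Rightarrow> 'a \<Rightarrow> ('v \<Rightarrow> bool) pmf" where
  "votes \<sigma>V h a = Pi_pmf UNIV False (\<lambda>i. \<sigma>V i h a)"

(* distribution of the implemented policy from history h with k rounds remaining *)
primrec cont :: "('a, 'v::finite) setter_strat \<Rightarrow> ('a, 'v) voter_strat \<Rightarrow> 'a \<Rightarrow> nat \<Rightarrow> ('a, 'v) hist \<Rightarrow> 'a pmf" where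
  "cont \<sigma>A \<sigma>V x0 0 h = return_pmf (dflt x0 h)"
| "cont \<sigma>A \<sigma>V x0 (Suc k) h =
     bind_pmf (\<sigma>A h) (\<lambda>a. bind_pmf (votes \<sigma>V h a) (\<lambda>S. cont \<sigma>A \<sigma>V x0 k (h @ [(a, S)])))"

(* outcome distribution in the T-round game starting at a setter node h *)
definition node_out :: "('a, 'v::finite) setter_strat \<Rightarrow> ('a, 'v) voter_strat \<Rightarrow> 'a \<Rightarrow> nat \<Rightarrow> ('a, 'v) hist \<Rightarrow> 'a pmf" where
  "node_out \<sigma>A \<sigma>V x0 T h = cont \<sigma>A \<sigma>V x0 (T - length h) h"

(* outcome distribution starting at the voting node where proposal a was made after history h *)
definition vnode_out :: "('a, 'v::finite) setter_strat \<Rightarrow> ('a, 'v) voter_strat \<Rightarrow> 'a \<Rightarrow> nat \<Rightarrow> ('a, 'v) hist \<Rightarrow> 'a \<Rightarrow> 'a pmf" where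
  "vnode_out \<sigma>A \<sigma>V x0 T h a =
     bind_pmf (votes \<sigma>V h a) (\<lambda>S. cont \<sigma>A \<sigma>V x0 (T - Suc (length h)) (h @ [(a, S)]))"

definition EU :: "'a pmf \<Rightarrow> ('a \<Rightarrow> real) \<Rightarrow> real" where
  "EU p f = measure_pmf.expectation p f"

(* subgame perfection: in every subgame (setter nodes and voting nodes of rounds 1..T),
   no player gains by deviating to any other strategy *)
definition spe :: "('v::finite \<Rightarrow> 'a \<Rightarrow> real) \<Rightarrow> ('a \<Rightarrow> real) \<Rightarrow> nat \<Rightarrow> 'a
    \<Rightarrow> ('a, 'v) setter_strat \<Rightarrow> ('a, 'v) voter_strat \<Rightarrow> bool" where
  "spe u uA T x0 \<sigma>A \<sigma>V \<longleftrightarrow>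
    (\<forall>h. length h < T \<longrightarrow>
       (\<forall>\<sigma>A'. EU (node_out \<sigma>A' \<sigma>V x0 T h) uA \<le> EU (node_out \<sigma>A \<sigma>V x0 T h) uA) \<and>
       (\<forall>i \<tau>. EU (node_out \<sigma>A (\<sigma>V(i := \<tau>)) x0 T h) (u i) \<le> EU (node_out \<sigma>A \<sigma>V x0 T h) (u i)) \<and>
       (\<forall>a. (\<forall>\<sigma>A'. EU (vnode_out \<sigma>A' \<sigma>V x0 T h a) uA \<le> EU (vnode_out \<sigma>A \<sigma>V x0 T h a) uA) \<and>
            (\<forall>i \<tau>. EU (vnode_out \<sigma>A (\<sigma>V(i := \<tau>)) x0 T h a) (u i)
                     \<le> EU (vnode_out \<sigma>A \<sigma>V x0 T h a) (u i))))"

definition as_if_pivotal :: "('v::finite \<Rightarrow> 'a \<Rightarrow> real) \<Rightarrow> nat \<Rightarrow> 'a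
    \<Rightarrow> ('a, 'v) setter_strat \<Rightarrow> ('a, 'v) voter_strat \<Rightarrow> bool" where
  "as_if_pivotal u T x0 \<sigma>A \<sigma>V \<longleftrightarrow>
    (\<forall>h a x y. length h < T \<longrightarrow>
       (\<forall>S. passes S \<longrightarrow> cont \<sigma>A \<sigma>V x0 (T - Suc (length h)) (h @ [(a, S)]) = return_pmf x) \<longrightarrow>
       (\<forall>S. \<not> passes S \<longrightarrow> cont \<sigma>A \<sigma>V x0 (T - Suc (length h)) (h @ [(a, S)]) = return_pmf y) \<longrightarrow>
       (\<forall>i. (u i x > u i y \<longrightarrow> \<sigma>V i h a = return_pmf True) \<and>
            (u i y > u i x \<longrightarrow> \<sigma>V i h a = return_pmf False)))"

definition is_eq :: "('v::finite \<Rightarrow> 'a \<Rightarrow> real) \<Rightarrow> ('a \<Rightarrow> real) \<Rightarrow> nat \<Rightarrow> 'a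
    \<Rightarrow> ('a, 'v) setter_strat \<Rightarrow> ('a, 'v) voter_strat \<Rightarrow> bool" where
  "is_eq u uA T x0 \<sigma>A \<sigma>V \<longleftrightarrow> spe u uA T x0 \<sigma>A \<sigma>V \<and> as_if_pivotal u T x0 \<sigma>A \<sigma>V"

definition fT :: "('v::finite \<Rightarrow> 'a \<Rightarrow> real) \<Rightarrow> ('a \<Rightarrow> real) \<Rightarrow> nat \<Rightarrow> 'a \<Rightarrow> 'a set" where
  "fT u uA T x0 = {x. \<exists>\<sigma>A \<sigma>V. is_eq u uA T x0 \<sigma>A \<sigma>V \<and> x \<in> set_pmf (cont \<sigma>A \<sigma>V x0 T [])}"

end

theory Submission imports Defs begin

lemma EU_return[simp]: "EU (return_pmf x) f = f x"
  by (simp add: EU_def)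

lemma EU_bound:
  fixes p :: "'a::finite pmf"
  assumes "\<forall>z\<in>set_pmf p. f z \<le> c"
  shows "EU p f \<le> c"
proof -
  have "EU p f \<le> EU p (\<lambda>_. c)"
    unfolding EU_def
    by (rule integral_mono_AE) (auto simp: integrable_measure_pmf_finite AE_measure_pmf_iff assms)
  thus ?thesis by (simp add: EU_def)
qed

lemma EU_eq:
  fixes p :: "'a::finite pmf"
  assumes "\<forall>z\<in>set_pmf p. f z \<le> c" and "c \<le> EU p f"
  shows "\<forall>z\<in>set_pmf p. f z = c"
proof -
  have int: "integrable (measure_pmf p) g" for g :: "'a \<Rightarrow> real"
    by (simp add: integrable_measure_pmf_finite)
  have "EU p (\<lambda>z. c - f z) = c - EU p f"
    unfolding EU_def by (simp add: int)
  hence "measure_pmf.expectation p (\<lambda>z. c - f z) \<le> 0" using assms(2) by (simp add: EU_def)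
  moreover have "AE z in measure_pmf p. 0 \<le> c - f z" using assms(1) by (simp add: AE_measure_pmf_iff)
  ultimately have "AE z in measure_pmf p. c - f z = 0"
    using integral_nonneg_eq_0_iff_AE[OF int] integral_nonneg_AE
    by (smt (verit) AE_cong)
  thus ?thesis using assms(1) by (auto simp: AE_measure_pmf_iff)
qed

lemma cont_local:
  assumes "\<forall>g. length g \<ge> length h \<longrightarrow> \<sigma>A g = \<sigma>A' g"
  shows "cont \<sigma>A \<sigma>V x0 k h = cont \<sigma>A' \<sigma>V x0 k h"
  using assms
proof (induction k arbitrary: h)
  case 0 then show ?case by simp
next
  case (Suc k)
  have "cont \<sigma>A \<sigma>V x0 k (h @ [(a, S)]) = cont \<sigma>A' \<sigma>V x0 k (h @ [(a, S)])" for a S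
    using Suc.prems by (intro Suc.IH) auto
  then show ?case using Suc.prems by simp
qed

lemma dflt_snoc[simp]: "dflt x0 (h @ [(a, S)]) = (if passes S then a else dflt x0 h)"
  by (simp add: dflt_def)

lemma passes_mono: "{i. S i} \<subseteq> {i. S' i} \<Longrightarrow> passes S \<Longrightarrow> passes S'"
  unfolding passes_def using card_mono[of "{i. S' i}" "{i. S i}"] by auto

lemma votes_return:
  assumes "\<forall>i. \<sigma>V i h a = return_pmf (f i)"
  shows "votes \<sigma>V h a = return_pmf f"
  using assms by (simp add: votes_def)

lemma passes_True: "passes (\<lambda>_::'v::finite. True)"
  by (simp add: passes_def)

lemma passes_False: "\<not> passes (\<lambda>_::'v::finite. False)"
  by (simp add: passes_def)

lemma set_votes:
  "S \<in> set_pmf (votes \<sigma>V h a) \<Longrightarrow> S i \<in> set_pmf (\<sigma>V i h a)"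
  by (auto simp: votes_def set_Pi_pmf PiE_dflt_def)


context
  fixes u :: "'v::finite \<Rightarrow> 'a::finite \<Rightarrow> real" and uA :: "'a \<Rightarrow> real"
  assumes inju: "\<forall>i. inj (u i)" and injA: "inj uA"
begin

lemma phi_prop: "phi u uA x \<in> Mset u x \<and> (\<forall>z\<in>Mset u x. uA z \<le> uA (phi u uA x))"
proof -
  let ?M = "Mset u x"
  have ne: "?M \<noteq> {}" and fin: "finite ?M" by (auto simp: Mset_def)
  have "Max (uA ` ?M) \<in> uA ` ?M" using ne fin by (intro Max_in) auto
  then obtain y where y: "y \<in> ?M" "uA y = Max (uA ` ?M)" by auto
  have ymax: "\<forall>z\<in>?M. uA z \<le> uA y" using y fin by simp
  have "\<exists>!y. y \<in> ?M \<and> (\<forall>z\<in>?M. uA z \<le> uA y)"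
  proof
    show "y \<in> ?M \<and> (\<forall>z\<in>?M. uA z \<le> uA y)" using y ymax by simp
  next
    fix w assume "w \<in> ?M \<and> (\<forall>z\<in>?M. uA z \<le> uA w)"
    hence "uA w = uA y" using y ymax by (meson order_antisym)
    thus "w = y" using injA by (simp add: inj_eq)
  qed
  thus ?thesis unfolding phi_def by (rule theI')
qed

lemma phi_ge: "maj u z x \<or> z = x \<Longrightarrow> uA z \<le> uA (phi u uA x)"
  using phi_prop[of x] by (auto simp: Mset_def)

lemma phi_maj: "phi u uA x \<noteq> x \<Longrightarrow> maj u (phi u uA x) x"
  using phi_prop[of x] by (auto simp: Mset_def)

lemma phi_self: "uA x \<le> uA (phi u uA x)"
  using phi_ge by blast

lemma pass_maj: "passes (\<lambda>i. u i X \<ge> u i Y) \<Longrightarrow> X \<noteq> Y \<Longrightarrow> maj u X Y"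
proof -
  assume p: "passes (\<lambda>i. u i X \<ge> u i Y)" and ne: "X \<noteq> Y"
  have "{i. u i X \<ge> u i Y} = {i. u i X > u i Y}"
    using inju ne by (auto simp: inj_eq less_le)
  thus ?thesis using p by (simp add: passes_def maj_def)
qed

lemma maj_pass: "maj u X Y \<Longrightarrow> passes (\<lambda>i. u i X \<ge> u i Y)"
  by (rule passes_mono[of "\<lambda>i. u i X > u i Y"]) (auto simp: passes_def maj_def)

abbreviation P where "P k \<equiv> phi u uA ^^ k"

lemma P_Suc: "P (Suc k) x = phi u uA (P k x)" by simp
lemma P_Suc': "P k (phi u uA x) = P (Suc k) x" by (simp add: funpow_Suc_right del: funpow.simps)

lemma out_le:
  "uA (P k (if passes (\<lambda>i. u i (P k a) \<ge> u i (P k x)) then a else x)) \<le> uA (P (Suc k) x)"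
  using pass_maj[where X="P k a" and Y="P k x"] phi_ge[of "P k a" "P k x"] phi_self[of "P k x"]
  by (auto simp del: funpow.simps simp: P_Suc)

lemma out_phi:
  "P k (if passes (\<lambda>i. u i (P k (phi u uA x)) \<ge> u i (P k x)) then phi u uA x else x) = P (Suc k) x"
proof (cases "P (Suc k) x = P k x")
  case True then show ?thesis by (auto simp: P_Suc')
next
  case False
  hence "maj u (P (Suc k) x) (P k x)" using phi_maj[of "P k x"] by (simp del: funpow.simps add: P_Suc)
  thus ?thesis using maj_pass by (auto simp: P_Suc')
qed

lemma voter_step:
  assumes "\<forall>j. j \<noteq> i \<longrightarrow> S j = (u j X \<ge> u j Y)"
  shows "u i (if passes S then X else Y) \<le> u i (if passes (\<lambda>j. u j X \<ge> u j Y) then X else Y)"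
proof -
  let ?S0 = "\<lambda>j. u j X \<ge> u j Y"
  consider "X = Y" | "u i X > u i Y" | "u i X < u i Y"
    using inju by (metis inj_eq linorder_neqE_linordered_idom)
  then show ?thesis
  proof cases
    case 1 then show ?thesis by simp
  next
    case 2
    have "{j. S j} \<subseteq> {j. ?S0 j}"
    proof safe
      fix j assume "S j" thus "?S0 j" using assms 2 by (cases "j = i") auto
    qed
    then show ?thesis using 2 passes_mono[of S ?S0] by auto
  next
    case 3
    have "{j. ?S0 j} \<subseteq> {j. S j}"
    proof safe
      fix j assume "?S0 j" thus "S j" using assms 3 by (cases "j = i") auto
    qed
    then show ?thesis using 3 passes_mono[of ?S0 S] by auto
  qed
qed


end

definition sA0 :: "('v::finite \<Rightarrow> 'a \<Rightarrow> real) \<Rightarrow> ('a \<Rightarrow> real) \<Rightarrow> 'a \<Rightarrow> ('a, 'v) setter_strat" where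
  "sA0 u uA x0 h = return_pmf (phi u uA (dflt x0 h))"

definition sV0 :: "('v::finite \<Rightarrow> 'a \<Rightarrow> real) \<Rightarrow> ('a \<Rightarrow> real) \<Rightarrow> nat \<Rightarrow> 'a \<Rightarrow> ('a, 'v) voter_strat" where
  "sV0 u uA T x0 i h y = return_pmf (u i ((phi u uA ^^ (T - Suc (length h))) y)
                                     \<ge> u i ((phi u uA ^^ (T - Suc (length h))) (dflt x0 h)))"

context
  fixes u :: "'v::finite \<Rightarrow> 'a::finite \<Rightarrow> real" and uA :: "'a \<Rightarrow> real" and T :: nat and x0 :: 'a
  assumes inju: "\<forall>i. inj (u i)" and injA: "inj uA"
begin

lemma sA0_app: "sA0 u uA x0 h = return_pmf (phi u uA (dflt x0 h))"
  by (simp add: sA0_def)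

abbreviation Q where "Q k \<equiv> phi u uA ^^ k"

lemma votes0: "votes (sV0 u uA T x0) h a
   = return_pmf (\<lambda>i. u i (Q (T - Suc (length h)) a) \<ge> u i (Q (T - Suc (length h)) (dflt x0 h)))"
  by (rule votes_return) (simp add: sV0_def)

lemma onpath:
  "length h + k = T \<Longrightarrow> cont (sA0 u uA x0) (sV0 u uA T x0) x0 k h = return_pmf (Q k (dflt x0 h))"
proof (induction k arbitrary: h)
  case 0 then show ?case by simp
next
  case (Suc k)
  have k: "T - Suc (length h) = k" using Suc.prems by simp
  have IH: "cont (sA0 u uA x0) (sV0 u uA T x0) x0 k (h @ [(a, S)]) = return_pmf (Q k (if passes S then a else dflt x0 h))" for a S
    using Suc.IH[of "h @ [(a, S)]"] Suc.prems by simp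
  show ?case
    using out_phi[OF inju injA, of k "dflt x0 h"]
    by (simp add: sA0_app[of h] votes0 k IH bind_return_pmf del: funpow.simps)
qed


lemma setter_dev:
  "length h + k = T \<Longrightarrow> \<forall>z\<in>set_pmf (cont \<sigma>A' (sV0 u uA T x0) x0 k h). uA z \<le> uA (Q k (dflt x0 h))"
proof (induction k arbitrary: h)
  case 0 then show ?case by simp
next
  case (Suc k)
  have k: "T - Suc (length h) = k" using Suc.prems by simp
  show ?case
  proof
    fix z assume "z \<in> set_pmf (cont \<sigma>A' (sV0 u uA T x0) x0 (Suc k) h)"
    then obtain a S where S: "S \<in> set_pmf (votes (sV0 u uA T x0) h a)"
      and z: "z \<in> set_pmf (cont \<sigma>A' (sV0 u uA T x0) x0 k (h @ [(a, S)]))"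
      by auto
    have S0: "S = (\<lambda>i. u i (Q k a) \<ge> u i (Q k (dflt x0 h)))" using S by (simp add: votes0 k)
    have "uA z \<le> uA (Q k (dflt x0 (h @ [(a, S)])))" using Suc.IH[of "h @ [(a, S)]"] Suc.prems z by simp
    also have "\<dots> \<le> uA (Q (Suc k) (dflt x0 h))"
      using out_le[OF inju injA, where k=k and a=a and x="dflt x0 h"] by (simp add: S0 del: funpow.simps)
    finally show "uA z \<le> uA (Q (Suc k) (dflt x0 h))" .
  qed
qed

lemma voter_dev:
  "length h + k = T \<Longrightarrow> \<forall>z\<in>set_pmf (cont (sA0 u uA x0) ((sV0 u uA T x0)(i := \<tau>)) x0 k h). u i z \<le> u i (Q k (dflt x0 h))"
proof (induction k arbitrary: h)
  case 0 then show ?case by simp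
next
  case (Suc k)
  have k: "T - Suc (length h) = k" using Suc.prems by simp
  let ?x = "dflt x0 h"
  let ?a = "phi u uA ?x"
  show ?case
  proof
    fix z assume "z \<in> set_pmf (cont (sA0 u uA x0) ((sV0 u uA T x0)(i := \<tau>)) x0 (Suc k) h)"
    then obtain S where S: "S \<in> set_pmf (votes ((sV0 u uA T x0)(i := \<tau>)) h ?a)"
      and z: "z \<in> set_pmf (cont (sA0 u uA x0) ((sV0 u uA T x0)(i := \<tau>)) x0 k (h @ [(?a, S)]))"
      by (auto simp: sA0_app[of h])
    have Sj: "\<forall>j. j \<noteq> i \<longrightarrow> S j = (u j (Q k ?a) \<ge> u j (Q k ?x))"
    proof (intro allI impI)
      fix j assume "j \<noteq> i"
      hence "S j \<in> set_pmf (sV0 u uA T x0 j h ?a)" using set_votes[OF S, of j] by simp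
      thus "S j = (u j (Q k ?a) \<ge> u j (Q k ?x))" by (simp add: sV0_def k)
    qed
    have "\<forall>z\<in>set_pmf (cont (sA0 u uA x0) ((sV0 u uA T x0)(i := \<tau>)) x0 k (h @ [(?a, S)])). u i z \<le> u i (Q k (dflt x0 (h @ [(?a, S)])))"
      by (rule Suc.IH) (use Suc.prems in simp)
    hence "u i z \<le> u i (Q k (dflt x0 (h @ [(?a, S)])))" using z by blast
    also have "\<dots> = u i (if passes S then Q k ?a else Q k ?x)" by simp
    also have "\<dots> \<le> u i (if passes (\<lambda>j. u j (Q k ?a) \<ge> u j (Q k ?x)) then Q k ?a else Q k ?x)"
      by (rule voter_step[OF inju injA Sj])
    also have "\<dots> = u i (Q (Suc k) ?x)"
      using out_phi[OF inju injA, of k ?x] by (simp del: funpow.simps split: if_splits)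
    finally show "u i z \<le> u i (Q (Suc k) ?x)" .
  qed
qed


lemma vnode0:
  assumes "length h < T"
  shows "vnode_out \<sigma>A' (sV0 u uA T x0) x0 T h a =
    cont \<sigma>A' (sV0 u uA T x0) x0 (T - Suc (length h)) (h @ [(a, \<lambda>i. u i (Q (T - Suc (length h)) a) \<ge> u i (Q (T - Suc (length h)) (dflt x0 h)))])"
  by (simp add: vnode_out_def votes0 bind_return_pmf)

lemma spe0: "spe u uA T x0 (sA0 u uA x0) (sV0 u uA T x0)"
  unfolding spe_def
proof (intro conjI allI impI)
  fix h :: "('a, 'v) hist" assume hT: "length h < T"
  let ?k = "T - length h" and ?k' = "T - Suc (length h)"
  let ?x = "dflt x0 h"
  let ?sA = "sA0 u uA x0" and ?sV = "sV0 u uA T x0"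
  have on: "node_out ?sA ?sV x0 T h = return_pmf (Q ?k ?x)"
    unfolding node_out_def by (rule onpath) (use hT in simp)
  show "EU (node_out \<sigma>A' ?sV x0 T h) uA \<le> EU (node_out ?sA ?sV x0 T h) uA" for \<sigma>A'
    unfolding on EU_return unfolding node_out_def
    by (rule EU_bound, rule setter_dev) (use hT in simp)
  show "EU (node_out ?sA (?sV(i := \<tau>)) x0 T h) (u i) \<le> EU (node_out ?sA ?sV x0 T h) (u i)" for i \<tau>
    unfolding on EU_return unfolding node_out_def
    by (rule EU_bound, rule voter_dev) (use hT in simp)
  fix a
  let ?S0 = "\<lambda>i. u i (Q ?k' a) \<ge> u i (Q ?k' ?x)"
  have von: "vnode_out ?sA ?sV x0 T h a = return_pmf (Q ?k' (if passes ?S0 then a else ?x))"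
    unfolding vnode0[OF hT] by (subst onpath) (use hT in simp_all)
  show "EU (vnode_out \<sigma>A' ?sV x0 T h a) uA \<le> EU (vnode_out ?sA ?sV x0 T h a) uA" for \<sigma>A'
  proof -
    have "\<forall>z\<in>set_pmf (cont \<sigma>A' ?sV x0 ?k' (h @ [(a, ?S0)])). uA z \<le> uA (Q ?k' (dflt x0 (h @ [(a, ?S0)])))"
      by (rule setter_dev) (use hT in simp)
    hence "EU (vnode_out \<sigma>A' ?sV x0 T h a) uA \<le> uA (Q ?k' (if passes ?S0 then a else ?x))"
      unfolding vnode0[OF hT] by (intro EU_bound) simp
    thus ?thesis by (simp add: von)
  qed
  show "EU (vnode_out ?sA (?sV(i := \<tau>)) x0 T h a) (u i) \<le> EU (vnode_out ?sA ?sV x0 T h a) (u i)" for i \<tau>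
    unfolding von EU_return
  proof (rule EU_bound, rule ballI)
    fix z assume "z \<in> set_pmf (vnode_out ?sA (?sV(i := \<tau>)) x0 T h a)"
    then obtain S where S: "S \<in> set_pmf (votes (?sV(i := \<tau>)) h a)"
      and z: "z \<in> set_pmf (cont ?sA (?sV(i := \<tau>)) x0 ?k' (h @ [(a, S)]))"
      by (auto simp: vnode_out_def)
    have Sj: "\<forall>j. j \<noteq> i \<longrightarrow> S j = ?S0 j"
    proof (intro allI impI)
      fix j assume "j \<noteq> i"
      hence "S j \<in> set_pmf (?sV j h a)" using set_votes[OF S, of j] by simp
      thus "S j = ?S0 j" by (simp add: sV0_def)
    qed
    have "\<forall>z\<in>set_pmf (cont ?sA (?sV(i := \<tau>)) x0 ?k' (h @ [(a, S)])). u i z \<le> u i (Q ?k' (dflt x0 (h @ [(a, S)])))"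
      by (rule voter_dev) (use hT in simp)
    hence "u i z \<le> u i (Q ?k' (dflt x0 (h @ [(a, S)])))" using z by blast
    also have "\<dots> = u i (if passes S then Q ?k' a else Q ?k' ?x)" by simp
    also have "\<dots> \<le> u i (if passes ?S0 then Q ?k' a else Q ?k' ?x)"
      by (rule voter_step[OF inju injA Sj])
    also have "\<dots> = u i (Q ?k' (if passes ?S0 then a else ?x))" by simp
    finally show "u i z \<le> u i (Q ?k' (if passes ?S0 then a else ?x))" .
  qed
qed

lemma piv0: "as_if_pivotal u T x0 (sA0 u uA x0) (sV0 u uA T x0)"
  unfolding as_if_pivotal_def
proof (intro allI impI)
  fix h :: "('a, 'v) hist" and a X Y
  assume hT: "length h < T"
    and pX: "\<forall>S. passes S \<longrightarrow> cont (sA0 u uA x0) (sV0 u uA T x0) x0 (T - Suc (length h)) (h @ [(a, S)]) = return_pmf X"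
    and pY: "\<forall>S. \<not> passes S \<longrightarrow> cont (sA0 u uA x0) (sV0 u uA T x0) x0 (T - Suc (length h)) (h @ [(a, S)]) = return_pmf Y"
  let ?k' = "T - Suc (length h)"
  have c: "cont (sA0 u uA x0) (sV0 u uA T x0) x0 ?k' (h @ [(a, S)]) = return_pmf (Q ?k' (if passes S then a else dflt x0 h))" for S
    by (subst onpath) (use hT in simp_all)
  have X: "X = Q ?k' a" using pX[rule_format, OF passes_True] c[of "\<lambda>_. True"] by (simp add: passes_True)
  have Y: "Y = Q ?k' (dflt x0 h)" using pY[rule_format, OF passes_False] c[of "\<lambda>_. False"] by (simp add: passes_False)
  fix i
  show "(u i X > u i Y \<longrightarrow> sV0 u uA T x0 i h a = return_pmf True) \<and>
        (u i Y > u i X \<longrightarrow> sV0 u uA T x0 i h a = return_pmf False)"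
    by (auto simp: sV0_def X Y)
qed

lemma eq0: "is_eq u uA T x0 (sA0 u uA x0) (sV0 u uA T x0)"
  unfolding is_eq_def using spe0 piv0 by blast


lemma eq_path:
  assumes eq: "is_eq u uA T x0 \<sigma>A \<sigma>V"
  shows "length h + k = T \<Longrightarrow> cont \<sigma>A \<sigma>V x0 k h = return_pmf (Q k (dflt x0 h))"
proof (induction k arbitrary: h)
  case 0 then show ?case by simp
next
  case (Suc k)
  have hT: "length h < T" and k: "T - Suc (length h) = k" and k2: "T - length h = Suc k"
    using Suc.prems by auto
  let ?x = "dflt x0 h"
  define g where "g a = (if maj u (Q k a) (Q k ?x) then Q k a else Q k ?x)" for a
  have IH: "cont \<sigma>A \<sigma>V x0 k (h @ [(a, S)]) = return_pmf (Q k (if passes S then a else ?x))" for a S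
    using Suc.IH[of "h @ [(a, S)]"] Suc.prems by simp
  have piv: "as_if_pivotal u T x0 \<sigma>A \<sigma>V" and spe: "spe u uA T x0 \<sigma>A \<sigma>V"
    using eq by (auto simp: is_eq_def)
  have vote: "bind_pmf (votes \<sigma>V h a) (\<lambda>S. cont \<sigma>A \<sigma>V x0 k (h @ [(a, S)])) = return_pmf (g a)" for a
  proof (cases "Q k a = Q k ?x")
    case True
    have "bind_pmf (votes \<sigma>V h a) (\<lambda>S. cont \<sigma>A \<sigma>V x0 k (h @ [(a, S)])) = bind_pmf (votes \<sigma>V h a) (\<lambda>S. return_pmf (Q k ?x))"
    proof -
      have "(\<lambda>S. cont \<sigma>A \<sigma>V x0 k (h @ [(a, S)])) = (\<lambda>S. return_pmf (Q k ?x))"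
        using True by (intro ext) (simp only: IH if_distrib[of "Q k"] if_cancel)
      thus ?thesis by simp
    qed
    then show ?thesis using True by (simp add: g_def)
  next
    case False
    have pX: "\<forall>S. passes S \<longrightarrow> cont \<sigma>A \<sigma>V x0 (T - Suc (length h)) (h @ [(a, S)]) = return_pmf (Q k a)"
      by (simp add: IH k)
    have pY: "\<forall>S. \<not> passes S \<longrightarrow> cont \<sigma>A \<sigma>V x0 (T - Suc (length h)) (h @ [(a, S)]) = return_pmf (Q k ?x)"
      by (simp add: IH k)
    have iv: "\<forall>i. (u i (Q k a) > u i (Q k ?x) \<longrightarrow> \<sigma>V i h a = return_pmf True) \<and>
            (u i (Q k ?x) > u i (Q k a) \<longrightarrow> \<sigma>V i h a = return_pmf False)"
      using piv unfolding as_if_pivotal_def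
      apply -
      apply (drule spec[of _ h], drule spec[of _ a], drule spec[of _ "Q k a"], drule spec[of _ "Q k ?x"])
      using hT pX pY apply (simp only: k simp_thms)
      apply (erule impE, assumption)+
      apply assumption
      done
    have "\<forall>i. \<sigma>V i h a = return_pmf (u i (Q k a) > u i (Q k ?x))"
    proof
      fix i
      have "u i (Q k a) \<noteq> u i (Q k ?x)" using False inju by (simp add: inj_eq)
      then show "\<sigma>V i h a = return_pmf (u i (Q k a) > u i (Q k ?x))"
      proof (cases "u i (Q k a) > u i (Q k ?x)")
        case True then show ?thesis using iv by simp
      next
        case False
        hence "u i (Q k ?x) > u i (Q k a)" using \<open>u i (Q k a) \<noteq> u i (Q k ?x)\<close> by simp
        then show ?thesis using iv False by simp
      qed
    qed
    hence vt: "votes \<sigma>V h a = return_pmf (\<lambda>i. u i (Q k a) > u i (Q k ?x))" by (rule votes_return)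
    have "passes (\<lambda>i. u i (Q k a) > u i (Q k ?x)) = maj u (Q k a) (Q k ?x)"
      by (simp add: passes_def maj_def)
    then show ?thesis by (simp add: vt bind_return_pmf IH g_def)
  qed
  have main: "cont \<sigma>A \<sigma>V x0 (Suc k) h = bind_pmf (\<sigma>A h) (\<lambda>a. return_pmf (g a))"
    by (simp add: vote)
  have gphi: "g (phi u uA ?x) = Q (Suc k) ?x"
  proof (cases "maj u (Q (Suc k) ?x) (Q k ?x)")
    case True then show ?thesis by (simp add: g_def P_Suc'[OF inju injA] del: funpow.simps)
  next
    case False
    hence "Q (Suc k) ?x = Q k ?x" using phi_maj[OF inju injA, of "Q k ?x"] by auto
    then show ?thesis using False by (simp add: g_def P_Suc'[OF inju injA] del: funpow.simps)
  qed
  define \<sigma>A' where "\<sigma>A' = \<sigma>A(h := return_pmf (phi u uA ?x))"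
  have loc: "cont \<sigma>A' \<sigma>V x0 k (h @ [(a, S)]) = cont \<sigma>A \<sigma>V x0 k (h @ [(a, S)])" for a S
    by (rule cont_local) (auto simp: \<sigma>A'_def)
  have dev: "node_out \<sigma>A' \<sigma>V x0 T h = return_pmf (Q (Suc k) ?x)"
    unfolding node_out_def k2
    by (simp add: loc vote bind_return_pmf gphi del: funpow.simps, simp add: \<sigma>A'_def bind_return_pmf gphi del: funpow.simps)
  have ge: "uA (Q (Suc k) ?x) \<le> EU (bind_pmf (\<sigma>A h) (\<lambda>a. return_pmf (g a))) uA"
  proof -
    have "EU (node_out \<sigma>A' \<sigma>V x0 T h) uA \<le> EU (node_out \<sigma>A \<sigma>V x0 T h) uA"
      using spe hT unfolding spe_def by blast
    moreover have "node_out \<sigma>A \<sigma>V x0 T h = cont \<sigma>A \<sigma>V x0 (Suc k) h"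
      by (simp add: node_out_def k2)
    ultimately show ?thesis unfolding dev main EU_return by simp
  qed
  have le: "\<forall>z\<in>set_pmf (bind_pmf (\<sigma>A h) (\<lambda>a. return_pmf (g a))). uA z \<le> uA (Q (Suc k) ?x)"
  proof
    fix z assume "z \<in> set_pmf (bind_pmf (\<sigma>A h) (\<lambda>a. return_pmf (g a)))"
    then obtain a where z: "z = g a" by auto
    show "uA z \<le> uA (Q (Suc k) ?x)"
      using phi_ge[OF inju injA, of "Q k a" "Q k ?x"] phi_self[OF inju injA, of "Q k ?x"]
      by (simp add: z g_def)
  qed
  have "\<forall>z\<in>set_pmf (bind_pmf (\<sigma>A h) (\<lambda>a. return_pmf (g a))). uA z = uA (Q (Suc k) ?x)"
    by (rule EU_eq[OF le ge])
  hence "set_pmf (bind_pmf (\<sigma>A h) (\<lambda>a. return_pmf (g a))) \<subseteq> {Q (Suc k) ?x}"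
    using injA by (auto simp: inj_eq)
  thus ?case unfolding main set_pmf_subset_singleton .
qed



lemma fix_stable: "phi u uA (Q j y) = Q j y \<Longrightarrow> Q (j + m) y = Q j y"
  by (induction m) auto

lemma P_mono: "uA (Q n y) \<le> uA (Q (n + m) y)"
proof (induction m)
  case 0 then show ?case by simp
next
  case (Suc m)
  have "uA (Q (n + m) y) \<le> uA (Q (n + Suc m) y)"
    using phi_self[OF inju injA, of "Q (n + m) y"] by simp
  then show ?case using Suc.IH by linarith
qed

lemma fixT: assumes "T \<ge> 1" shows "Q T x0 = x0 \<longleftrightarrow> phi u uA x0 = x0"
proof
  assume a: "phi u uA x0 = x0"
  have "Q (0 + T) x0 = Q 0 x0" by (rule fix_stable) (simp add: a)
  thus "Q T x0 = x0" by simp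
next
  assume a: "Q T x0 = x0"
  show "phi u uA x0 = x0"
  proof (rule ccontr)
    assume ne: "phi u uA x0 \<noteq> x0"
    have "uA x0 \<le> uA (phi u uA x0)" by (rule phi_self[OF inju injA])
    hence lt: "uA x0 < uA (phi u uA x0)" using ne injA by (auto simp: inj_eq less_le)
    have "uA (Q 1 x0) \<le> uA (Q (1 + (T - 1)) x0)" by (rule P_mono)
    hence "uA (phi u uA x0) \<le> uA x0" using assms a by simp
    thus False using lt by simp
  qed
qed

lemma reach_fix:
  assumes "CARD('a) \<le> T + 1"
  shows "phi u uA (Q T y) = Q T y"
proof (rule ccontr)
  assume ne: "phi u uA (Q T y) \<noteq> Q T y"
  have step: "Q (Suc j) y \<noteq> Q j y" if "j \<le> T" for j
  proof
    assume eq: "Q (Suc j) y = Q j y"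
    hence fx: "phi u uA (Q j y) = Q j y" by simp
    have "Q (j + (T - j)) y = Q j y" by (rule fix_stable[OF fx])
    moreover have "Q (j + (Suc T - j)) y = Q j y" by (rule fix_stable[OF fx])
    ultimately show False using ne that by (simp add: Suc_diff_le)
  qed
  have strict: "uA (Q j y) < uA (Q (Suc j) y)" if "j \<le> T" for j
    using phi_self[OF inju injA, of "Q j y"] step[OF that] injA by (auto simp: inj_eq less_le)
  have lt: "i < j \<Longrightarrow> j \<le> T + 1 \<Longrightarrow> uA (Q i y) < uA (Q j y)" for i j
  proof (induction j)
    case 0 then show ?case by simp
  next
    case (Suc j)
    show ?case
    proof (cases "i = j")
      case True then show ?thesis using strict[of j] Suc.prems by simp
    next
      case False
      hence "uA (Q i y) < uA (Q j y)" using Suc by simp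
      also have "\<dots> < uA (Q (Suc j) y)" using strict[of j] Suc.prems by simp
      finally show ?thesis .
    qed
  qed
  have inj: "inj_on (\<lambda>j. Q j y) {0..T+1}"
  proof (rule inj_onI)
    fix i j assume i: "i \<in> {0..T+1}" and j: "j \<in> {0..T+1}" and e: "Q i y = Q j y"
    show "i = j"
    proof (rule linorder_cases[of i j])
      assume "i < j" then show ?thesis using lt[of i j] j e by simp
    next
      assume "j < i" then show ?thesis using lt[of j i] i e by simp
    qed
  qed
  have "card ((\<lambda>j. Q j y) ` {0..T+1}) = T + 2" using card_image[OF inj] by simp
  moreover have "card ((\<lambda>j. Q j y) ` {0..T+1}) \<le> CARD('a)" by (rule card_mono) auto
  ultimately show False using assms by simp
qed

end


theorem lemma1:
  fixes u :: "'v::finite \<Rightarrow> 'a::finite \<Rightarrow> real" and uA :: "'a \<Rightarrow> real"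
    and T :: nat and x0 :: 'a
  assumes "odd CARD('v)" and "inj uA" and "\<forall>i. inj (u i)" and "T \<ge> 1"
  shows "fT u uA T x0 = {(phi u uA ^^ T) x0} \<and>
         (\<exists>\<sigma>A \<sigma>V. is_eq u uA T x0 \<sigma>A \<sigma>V \<and>
           (\<forall>h. length h < T \<longrightarrow> \<sigma>A h = return_pmf (phi u uA (dflt x0 h))) \<and>
           (\<forall>h y i. length h < T \<longrightarrow>
              \<sigma>V i h y = return_pmf (u i ((phi u uA ^^ (T - Suc (length h))) y)
                                     \<ge> u i ((phi u uA ^^ (T - Suc (length h))) (dflt x0 h))))) \<and>
         (fT u uA T x0 = {x0} \<longleftrightarrow> x0 \<in> Eset u uA) \<and>
         (T \<ge> CARD('a) - 1 \<longrightarrow> (\<Union>y\<in>UNIV. fT u uA T y) = Eset u uA)"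
proof -
  note inju = assms(3) and injA = assms(2)
  have fT: "fT u uA T y = {(phi u uA ^^ T) y}" for y
  proof
    show "fT u uA T y \<subseteq> {(phi u uA ^^ T) y}"
    proof
      fix z assume "z \<in> fT u uA T y"
      then obtain \<sigma>A \<sigma>V where eq: "is_eq u uA T y \<sigma>A \<sigma>V" and z: "z \<in> set_pmf (cont \<sigma>A \<sigma>V y T [])"
        unfolding fT_def by blast
      have "cont \<sigma>A \<sigma>V y T [] = return_pmf ((phi u uA ^^ T) y)"
        using eq_path[OF inju injA eq, of "[]" T] by (simp add: dflt_def)
      thus "z \<in> {(phi u uA ^^ T) y}" using z by (simp add: dflt_def)
    qed
  next
    have "cont (sA0 u uA y) (sV0 u uA T y) y T [] = return_pmf ((phi u uA ^^ T) y)"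
      using onpath[OF inju injA, of "[]" T T y] by (simp add: dflt_def)
    thus "{(phi u uA ^^ T) y} \<subseteq> fT u uA T y"
      unfolding fT_def using eq0[OF inju injA, of T y]
      by (intro subsetI CollectI exI[of _ "sA0 u uA y"] exI[of _ "sV0 u uA T y"]) simp
  qed
  have A: "\<exists>\<sigma>A \<sigma>V. is_eq u uA T x0 \<sigma>A \<sigma>V \<and>
           (\<forall>h. length h < T \<longrightarrow> \<sigma>A h = return_pmf (phi u uA (dflt x0 h))) \<and>
           (\<forall>h y i. length h < T \<longrightarrow>
              \<sigma>V i h y = return_pmf (u i ((phi u uA ^^ (T - Suc (length h))) y)
                                     \<ge> u i ((phi u uA ^^ (T - Suc (length h))) (dflt x0 h))))"
    using eq0[OF inju injA, of T x0] by (intro exI[of _ "sA0 u uA x0"] exI[of _ "sV0 u uA T x0"]) (simp add: sA0_def sV0_def)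
  have B: "fT u uA T x0 = {x0} \<longleftrightarrow> x0 \<in> Eset u uA"
    using fixT[OF inju injA assms(4), of x0] by (simp add: fT Eset_def)
  have C: "(\<Union>y\<in>UNIV. fT u uA T y) = Eset u uA" if "T \<ge> CARD('a) - 1"
  proof
    show "(\<Union>y\<in>UNIV. fT u uA T y) \<subseteq> Eset u uA"
      using reach_fix[OF inju injA, of T] that by (auto simp: fT Eset_def)
  next
    show "Eset u uA \<subseteq> (\<Union>y\<in>UNIV. fT u uA T y)"
    proof
      fix x assume "x \<in> Eset u uA"
      hence "(phi u uA ^^ T) x = x" using fixT[OF inju injA assms(4), of x] by (simp add: Eset_def)
      thus "x \<in> (\<Union>y\<in>UNIV. fT u uA T y)" unfolding fT by (metis UN_iff UNIV_I singletonI)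
    qed
  qed
  show ?thesis using fT A B C by blast
qed

end
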